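(* Let $\Pi\in\mathcal P_\infty$ and $n\in\mathbb N\cup\{\infty\}$. Then the random labelled poset $P(n,W)$ on $[n]$ has the same distribution for every kernel $W$ (on any ordered probability space) with $\Pi_W=\Pi$.
   Context: A poset is a nonempty set with a strict partial order $<$. For finite posets $Q,P$, $t(Q,P)$ is the proportion of all maps $\varphi$ from the ground set of $Q$ to that of $P$ with $x<_Qy\Rightarrow\varphi(x)<_P\varphi(y)$. Let $\mathcal P$ be the set of isomorphism classes of finite nonempty posets; identify $\mathcal P$ with its (injective) image under $P\mapsto((t(Q,P))_{Q\in\mathcal P},|P|^{-1})\in[0,1]^{\mathcal P}\times[0,1]$, let $\overline{\mathcal P}$ be the closure (product topology) and $\mathcal P_\infty=\overline{\mathcal P}\setminus\mathcal P$. The functions $t(Q,\cdot)$ extend continuously to $\overline{\mathcal P}$, and an element of $\mathcal P_\infty$ is determined by the values $t(Q,\cdot)$, $Q\in\mathcal P$. An ordered probability space $(\mathcal S,\mathcal F,\mu,\prec)$ is a probability space with a strict partial order $\prec$ such that $\{(x,y):x\prec y\}\in\mathcal F\times\mathcal F$. A kernel on it is a measurable $W:\mathcal S^2\to[0,1]$ such that for all $x,y,z$: $W(x,y)>0\Rightarrow x\prec y$, and ($W(x,y)>0$, $W(y,z)>0$) $\Rightarrow W(x,z)=1$. For a kernel $W$, $\Pi_W$ denotes the (existing, unique) element of $\mathcal P_\infty$ with $t(Q,\Pi_W)=\int\prod_{(i,j):i<_Qj}W(x_i,x_j)\,d\mu(x_1)\cdots d\mu(x_{|Q|})$ for all finite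 posets $Q$ on $\{1,\dots,|Q|\}$. For $n\in\mathbb N\cup\{\infty\}$, $[n]=\{1,\dots,n\}$ ($[\infty]=\mathbb N$), and $P(n,W)$ is the random poset on $[n]$ obtained from i.i.d. $X_i\sim\mu$ and independent i.i.d. $\xi_{ij}\sim U(0,1)$ by declaring $i\prec j$ iff $\xi_{ij}<W(X_i,X_j)$. *)

theory Defs
  imports "HOL-Probability.Probability" "HOL-Library.Extended_Nat"
begin

definition ordered_prob_space :: "'a measure \<Rightarrow> ('a \<Rightarrow> 'a \<Rightarrow> bool) \<Rightarrow> bool" where
  "ordered_prob_space M lt \<longleftrightarrow>
     prob_space M \<and>
     (\<forall>x. \<not> lt x x) \<and>
     (\<forall>x y z. lt x y \<longrightarrow> lt y z \<longrightarrow> lt x z) \<and>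
     {(x, y). lt x y} \<inter> space (M \<Otimes>\<^sub>M M) \<in> sets (M \<Otimes>\<^sub>M M)"

definition poset_kernel :: "'a measure \<Rightarrow> ('a \<Rightarrow> 'a \<Rightarrow> bool) \<Rightarrow> ('a \<Rightarrow> 'a \<Rightarrow> real) \<Rightarrow> bool" where
  "poset_kernel M lt W \<longleftrightarrow>
     ordered_prob_space M lt \<and>
     (\<lambda>(x, y). W x y) \<in> borel_measurable (M \<Otimes>\<^sub>M M) \<and>
     (\<forall>x y. 0 \<le> W x y \<and> W x y \<le> 1) \<and>
     (\<forall>x y. W x y > 0 \<longrightarrow> lt x y) \<and>
     (\<forall>x y z. W x y > 0 \<longrightarrow> W y z > 0 \<longrightarrow> W x z = 1)"

text \<open>A finite (nonempty) poset on the ground set {1..k}, given by its strict order Q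
  (values of Q outside {1..k} are irrelevant).\<close>
definition finite_poset_on :: "nat \<Rightarrow> (nat \<Rightarrow> nat \<Rightarrow> bool) \<Rightarrow> bool" where
  "finite_poset_on k Q \<longleftrightarrow> k \<ge> 1 \<and>
     (\<forall>i\<in>{1..k}. \<not> Q i i) \<and>
     (\<forall>i\<in>{1..k}. \<forall>j\<in>{1..k}. \<forall>l\<in>{1..k}. Q i j \<longrightarrow> Q j l \<longrightarrow> Q i l)"

definition hom_density :: "'a measure \<Rightarrow> ('a \<Rightarrow> 'a \<Rightarrow> real) \<Rightarrow> nat \<Rightarrow> (nat \<Rightarrow> nat \<Rightarrow> bool) \<Rightarrow> real" where
  "hom_density M W k Q =
     (\<integral>x. (\<Prod>(i, j)\<in>{(i, j). i \<in> {1..k} \<and> j \<in> {1..k} \<and> Q i j}. W (x i) (x j))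
        \<partial>(PiM {1..k} (\<lambda>_. M)))"

definition label_set :: "enat \<Rightarrow> nat set" where
  "label_set n = {i. 1 \<le> i \<and> enat i \<le> n}"

text \<open>Underlying probability space: i.i.d. X_i ~ mu (i in N) and independent
  i.i.d. xi_ij ~ U(0,1).\<close>
definition sample_space :: "'a measure \<Rightarrow> ((nat \<Rightarrow> 'a) \<times> (nat \<times> nat \<Rightarrow> real)) measure" where
  "sample_space M = PiM UNIV (\<lambda>_::nat. M) \<Otimes>\<^sub>M
                     PiM UNIV (\<lambda>_::nat \<times> nat. uniform_measure lborel {0..1::real})"

text \<open>The random poset P(n,W) as a relation on N (false outside [n]):
  i \<prec> j iff xi_ij < W(X_i, X_j).\<close>
definition random_poset :: "enat \<Rightarrow> ('a \<Rightarrow> 'a \<Rightarrow> real) \<Rightarrow>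
     (nat \<Rightarrow> 'a) \<times> (nat \<times> nat \<Rightarrow> real) \<Rightarrow> (nat \<times> nat \<Rightarrow> bool)" where
  "random_poset n W \<omega> = (\<lambda>(i, j). i \<in> label_set n \<and> j \<in> label_set n \<and>
                                   snd \<omega> (i, j) < W (fst \<omega> i) (fst \<omega> j))"

definition random_poset_law :: "'a measure \<Rightarrow> ('a \<Rightarrow> 'a \<Rightarrow> real) \<Rightarrow> enat \<Rightarrow>
     (nat \<times> nat \<Rightarrow> bool) measure" where
  "random_poset_law M W n =
     distr (sample_space M) (PiM UNIV (\<lambda>_::nat \<times> nat. count_space (UNIV :: bool set)))
           (random_poset n W)"

end

theory Submission
  imports Defs
begin

lemma kernel_props:
  assumes "poset_kernel M lt W"
  shows "prob_space M" "\<And>x y. 0 \<le> W x y" "\<And>x y. W x y \<le> 1" "\<And>x. W x x = 0"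
    "\<And>x y z. W x y > 0 \<Longrightarrow> W y z > 0 \<Longrightarrow> W x z = 1"
    "(\<lambda>(x, y). W x y) \<in> borel_measurable (M \<Otimes>\<^sub>M M)"
proof -
  show "prob_space M" using assms by (simp add: poset_kernel_def ordered_prob_space_def)
  show "\<And>x y. 0 \<le> W x y" "\<And>x y. W x y \<le> 1" using assms by (auto simp: poset_kernel_def)
  show "\<And>x y z. W x y > 0 \<Longrightarrow> W y z > 0 \<Longrightarrow> W x z = 1" using assms by (auto simp: poset_kernel_def)
  show "(\<lambda>(x, y). W x y) \<in> borel_measurable (M \<Otimes>\<^sub>M M)" using assms by (auto simp: poset_kernel_def)
  fix x
  have "\<not> lt x x" using assms by (simp add: poset_kernel_def ordered_prob_space_def)
  hence "\<not> W x x > 0" using assms by (auto simp: poset_kernel_def)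
  moreover have "0 \<le> W x x" using assms by (auto simp: poset_kernel_def)
  ultimately show "W x x = 0" by simp
qed

lemma W_meas:
  assumes "(\<lambda>(x, y). W x y) \<in> borel_measurable (M \<Otimes>\<^sub>M M)"
    and "f \<in> measurable N M" "g \<in> measurable N M"
  shows "(\<lambda>\<omega>. W (f \<omega>) (g \<omega>)) \<in> borel_measurable N"
  using measurable_compose[OF measurable_Pair[OF assms(2,3)] assms(1)] by simp

lemma prod_trancl:
  fixes w :: "'i \<times> 'i \<Rightarrow> real"
  assumes S: "finite S" and nn: "\<And>e. 0 \<le> w e"
    and tr: "\<And>a b c. w (a, b) > 0 \<Longrightarrow> w (b, c) > 0 \<Longrightarrow> w (a, c) = 1"
  shows "(\<Prod>e\<in>trancl S. w e) = (\<Prod>e\<in>S. w e)"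
proof (cases "\<exists>e\<in>S. w e = 0")
  case True
  then obtain e where e: "e \<in> S" "w e = 0" by blast
  have fin: "finite (trancl S)" using S by (simp add: finite_trancl)
  have "e \<in> trancl S" using e(1) by (cases e) (auto intro: r_into_trancl)
  then show ?thesis using e S fin by (metis prod_zero_iff)
next
  case False
  hence pos: "\<And>e. e \<in> S \<Longrightarrow> w e > 0" using nn by (metis less_eq_real_def)
  have claim: "w (a, b) > 0 \<and> ((a, b) \<in> S \<or> w (a, b) = 1)" if "(a, b) \<in> trancl S" for a b
    using that
  proof (induction rule: trancl_induct)
    case (base y) then show ?case using pos by auto
  next
    case (step y z)
    then have "w (a, z) = 1" using tr pos by blast
    then show ?case by simp
  qed
  have fin: "finite (trancl S)" using S by (simp add: finite_trancl)
  have sub: "S \<subseteq> trancl S" by auto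
  have "(\<Prod>e\<in>trancl S. w e) = (\<Prod>e\<in>trancl S - S. w e) * (\<Prod>e\<in>S. w e)"
    using prod.subset_diff[OF sub fin] by simp
  also have "(\<Prod>e\<in>trancl S - S. w e) = 1"
    by (rule prod.neutral) (use claim in auto)
  finally show ?thesis by simp
qed

abbreviation "U01 \<equiv> uniform_measure lborel {0..1::real}"

lemma prob_U01: "prob_space U01"
  by (rule prob_space_uniform_measure) auto

lemma space_U01[simp]: "space U01 = UNIV" by simp

lemma emeasure_U01:
  assumes "0 \<le> w" "w \<le> 1"
  shows "emeasure U01 {..<w} = ennreal w"
proof -
  have "{0..1::real} \<inter> {..<w} = {0..<w}" using assms by auto
  then show ?thesis using assms by (simp add: emeasure_uniform_measure divide_ennreal_def)
qed

lemma emeasure_PiM_U01: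
  fixes S :: "'i set"
  assumes S: "finite S" and w: "\<And>p. p \<in> S \<Longrightarrow> 0 \<le> w p \<and> w p \<le> 1"
  shows "emeasure (PiM UNIV (\<lambda>_. U01)) {\<xi>. \<forall>p\<in>S. \<xi> p < w p} = (\<Prod>p\<in>S. ennreal (w p))"
proof -
  have eq: "{\<xi>. \<forall>p\<in>S. \<xi> p < w p} = prod_emb UNIV (\<lambda>_. U01) S (Pi\<^sub>E S (\<lambda>p. {..<w p}))"
    by (auto simp: prod_emb_def PiE_iff)
  have "emeasure (PiM UNIV (\<lambda>_. U01)) (prod_emb UNIV (\<lambda>_. U01) S (Pi\<^sub>E S (\<lambda>p. {..<w p})))
      = (\<Prod>p\<in>S. emeasure U01 {..<w p})"
    by (rule emeasure_PiM_emb) (use prob_U01 S in auto)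
  also have "\<dots> = (\<Prod>p\<in>S. ennreal (w p))"
    using w by (intro prod.cong refl emeasure_U01) auto
  finally show ?thesis using eq by simp
qed

lemma space_sample: "space (sample_space M) = space (PiM UNIV (\<lambda>_::nat. M)) \<times> UNIV"
  by (simp add: sample_space_def space_pair_measure space_PiM PiE_UNIV_domain)

lemma X_meas: "(\<lambda>\<omega>. fst \<omega> i) \<in> measurable (sample_space M) M"
  unfolding sample_space_def
  by (rule measurable_compose[OF measurable_fst measurable_component_singleton]) auto

lemma Xi_meas: "(\<lambda>\<omega>. snd \<omega> p) \<in> borel_measurable (sample_space M)"
proof -
  have h: "(\<lambda>\<omega>. snd \<omega> p) \<in> measurable (sample_space M) U01"
    unfolding sample_space_def
    by (rule measurable_compose[OF measurable_snd measurable_component_singleton]) auto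
  have e: "sets U01 = sets borel" by simp
  show ?thesis using measurable_cong_sets[OF refl e] h by metis
qed

lemma WX_meas:
  assumes "poset_kernel M lt W"
  shows "(\<lambda>\<omega>. W (fst \<omega> i) (fst \<omega> j)) \<in> borel_measurable (sample_space M)"
  by (rule W_meas[OF kernel_props(6)[OF assms] X_meas X_meas])

lemma rp_meas:
  assumes "poset_kernel M lt W"
  shows "random_poset n W \<in> measurable (sample_space M) (PiM UNIV (\<lambda>_. count_space UNIV))"
proof -
  have "(\<lambda>\<omega> p. random_poset n W \<omega> p) \<in> measurable (sample_space M) (PiM UNIV (\<lambda>_. count_space UNIV))"
  proof (rule measurable_PiM_single')
    fix p :: "nat \<times> nat"
    obtain i j where p: "p = (i, j)" by (cases p)
    have "Measurable.pred (sample_space M) (\<lambda>\<omega>. snd \<omega> (i,j) < W (fst \<omega> i) (fst \<omega> j))"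
      using WX_meas[OF assms] Xi_meas by measurable
    then have "Measurable.pred (sample_space M) (\<lambda>\<omega>. random_poset n W \<omega> p)"
      unfolding random_poset_def p by simp
    then show "(\<lambda>\<omega>. random_poset n W \<omega> p) \<in> measurable (sample_space M) (count_space UNIV)"
      by (simp add: pred_def)
  qed auto
  then show ?thesis by simp
qed

lemma event_prob:
  assumes K: "poset_kernel M lt W" and S: "finite S"
  shows "emeasure (sample_space M)
      {\<omega> \<in> space (sample_space M). \<forall>p\<in>S. snd \<omega> p < W (fst \<omega> (fst p)) (fst \<omega> (snd p))}
     = (\<integral>\<^sup>+x. ennreal (\<Prod>p\<in>S. W (x (fst p)) (x (snd p))) \<partial>(PiM UNIV (\<lambda>_. M)))"
proof -
  let ?E = "{\<omega> \<in> space (sample_space M). \<forall>p\<in>S. snd \<omega> p < W (fst \<omega> (fst p)) (fst \<omega> (snd p))}"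
  let ?PX = "PiM UNIV (\<lambda>_::nat. M)" and ?PU = "PiM UNIV (\<lambda>_::nat\<times>nat. U01)"
  have E: "?E \<in> sets (sample_space M)"
  proof (rule sets.sets_Collect_finite_All[OF _ S])
    fix p :: "nat \<times> nat"
    have "Measurable.pred (sample_space M) (\<lambda>\<omega>. snd \<omega> p < W (fst \<omega> (fst p)) (fst \<omega> (snd p)))"
      using WX_meas[OF K] Xi_meas by measurable
    then show "{\<omega> \<in> space (sample_space M). snd \<omega> p < W (fst \<omega> (fst p)) (fst \<omega> (snd p))} \<in> sets (sample_space M)"
      by (simp add: pred_def)
  qed
  have pu: "prob_space ?PU" by (rule prob_space_PiM) (use prob_U01 in auto)
  then have sf: "sigma_finite_measure ?PU" by (rule prob_space_imp_sigma_finite)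
  have "emeasure (sample_space M) ?E = (\<integral>\<^sup>+x. emeasure ?PU (Pair x -` ?E) \<partial>?PX)"
    using sigma_finite_measure.emeasure_pair_measure_alt[OF sf, of ?E ?PX] E
    by (simp add: sample_space_def)
  also have "\<dots> = (\<integral>\<^sup>+x. ennreal (\<Prod>p\<in>S. W (x (fst p)) (x (snd p))) \<partial>?PX)"
  proof (rule nn_integral_cong)
    fix x assume x: "x \<in> space ?PX"
    have "Pair x -` ?E = {\<xi>. \<forall>p\<in>S. \<xi> p < W (x (fst p)) (x (snd p))}"
      using x by (auto simp: space_sample)
    then have "emeasure ?PU (Pair x -` ?E) = (\<Prod>p\<in>S. ennreal (W (x (fst p)) (x (snd p))))"
      using emeasure_PiM_U01[OF S, of "\<lambda>p. W (x (fst p)) (x (snd p))"] kernel_props[OF K] by simp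
    also have "\<dots> = ennreal (\<Prod>p\<in>S. W (x (fst p)) (x (snd p)))"
      using kernel_props(2)[OF K] by (simp add: prod_ennreal)
    finally show "emeasure ?PU (Pair x -` ?E) = ennreal (\<Prod>p\<in>S. W (x (fst p)) (x (snd p)))" .
  qed
  finally show ?thesis .
qed

lemma H_meas:
  assumes K: "poset_kernel M lt W" and A: "A \<subseteq> I \<times> I"
  shows "(\<lambda>y. \<Prod>(a, b)\<in>A. W (y a) (y b)) \<in> borel_measurable (PiM I (\<lambda>_. M))"
proof (rule borel_measurable_prod)
  fix e assume eA: "e \<in> A"
  obtain a b where e: "e = (a, b)" by (cases e)
  have ab: "a \<in> I" "b \<in> I" using eA e A by auto
  have m: "a \<in> I \<Longrightarrow> b \<in> I \<Longrightarrow> (\<lambda>y. W (y a) (y b)) \<in> borel_measurable (PiM I (\<lambda>_. M))"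
    by (rule W_meas[OF kernel_props(6)[OF K]]) (rule measurable_component_singleton, simp)+
  show "(\<lambda>y. case e of (a, b) \<Rightarrow> W (y a) (y b)) \<in> borel_measurable (PiM I (\<lambda>_. M))"
    using m ab e by simp
qed

lemma integral_reindex:
  fixes S :: "(nat \<times> nat) set" and g :: "nat \<Rightarrow> nat"
  assumes K: "poset_kernel M lt W" and S: "finite S"
    and g: "bij_betw g {1..k} (Field S)"
  shows "(\<integral>\<^sup>+x. ennreal (\<Prod>p\<in>S. W (x (fst p)) (x (snd p))) \<partial>(PiM UNIV (\<lambda>_. M)))
       = ennreal (hom_density M W k (\<lambda>a b. (g a, g b) \<in> trancl S))"
proof -
  let ?Q = "\<lambda>a b. (g a, g b) \<in> trancl S"
  let ?Qs = "{(a, b). a \<in> {1..k} \<and> b \<in> {1..k} \<and> ?Q a b}"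
  let ?H = "\<lambda>y. \<Prod>(a, b)\<in>?Qs. W (y a) (y b)"
  let ?PX = "PiM UNIV (\<lambda>_::nat. M)" and ?PK = "PiM {1..k} (\<lambda>_::nat. M)"
  let ?T = "\<lambda>\<omega>. \<lambda>n\<in>{1..k}. \<omega> (g n)"
  note kp = kernel_props[OF K]
  have bij: "bij_betw (map_prod g g) ?Qs (trancl S)"
  proof -
    have inj: "inj_on g {1..k}" using g by (simp add: bij_betw_def)
    have "inj_on (map_prod g g) ?Qs"
    proof (rule inj_onI)
      fix u v assume "u \<in> ?Qs" "v \<in> ?Qs" "map_prod g g u = map_prod g g v"
      then show "u = v" using inj_onD[OF inj] by (cases u; cases v) auto
    qed
    moreover have "map_prod g g ` ?Qs = trancl S"
    proof
      show "map_prod g g ` ?Qs \<subseteq> trancl S" by auto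
    next
      show "trancl S \<subseteq> map_prod g g ` ?Qs"
      proof
        fix e assume e: "e \<in> trancl S"
        obtain p q where pq: "e = (p, q)" by (cases e)
        have "p \<in> Field S" "q \<in> Field S" using e pq trancl_subset_Field2[of S] by auto
        then obtain a b where "a \<in> {1..k}" "b \<in> {1..k}" "p = g a" "q = g b"
          using g by (metis bij_betw_imp_surj_on imageE)
        then show "e \<in> map_prod g g ` ?Qs" using e pq by (auto intro!: image_eqI[where x="(a,b)"])
      qed
    qed
    ultimately show ?thesis by (simp add: bij_betw_def)
  qed
  have pw: "(\<Prod>p\<in>S. W (x (fst p)) (x (snd p))) = ?H (?T x)" for x
  proof -
    have "(\<Prod>p\<in>S. W (x (fst p)) (x (snd p))) = (\<Prod>p\<in>trancl S. W (x (fst p)) (x (snd p)))"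
      by (rule prod_trancl[symmetric, OF S]) (use kp in auto)
    also have "\<dots> = (\<Prod>e\<in>?Qs. W (x (fst (map_prod g g e))) (x (snd (map_prod g g e))))"
      by (rule prod.reindex_bij_betw[OF bij, symmetric])
    also have "\<dots> = ?H (?T x)"
      by (intro prod.cong refl) clarsimp
    finally show ?thesis .
  qed
  have reidx: "distr ?PX ?PK ?T = ?PK"
    using distr_PiM_reindex[of UNIV "\<lambda>_. M" g "{1..k}"] kp(1) g
    by (simp add: bij_betw_def)
  have Tm: "?T \<in> measurable ?PX ?PK"
    by (rule measurable_restrict) (rule measurable_component_singleton, simp)
  have Hm: "?H \<in> borel_measurable ?PK" by (rule H_meas[OF K]) auto
  have "(\<integral>\<^sup>+y. ennreal (?H y) \<partial>?PK) = (\<integral>\<^sup>+y. ennreal (?H y) \<partial>(distr ?PX ?PK ?T))"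
    using reidx by simp
  also have "\<dots> = (\<integral>\<^sup>+x. ennreal (?H (?T x)) \<partial>?PX)"
    by (rule nn_integral_distr[OF Tm]) (use Hm reidx in simp)
  finally have 1: "(\<integral>\<^sup>+x. ennreal (\<Prod>p\<in>S. W (x (fst p)) (x (snd p))) \<partial>?PX) = (\<integral>\<^sup>+y. ennreal (?H y) \<partial>?PK)"
    using pw by simp
  have pk: "prob_space ?PK" by (rule prob_space_PiM) (use kp(1) in auto)
  have bnd: "\<bar>?H y\<bar> \<le> 1" for y
  proof -
    have "0 \<le> ?H y" by (rule prod_nonneg) (use kp in auto)
    moreover have "?H y \<le> 1" by (rule prod_le_1) (use kp in auto)
    ultimately show ?thesis by simp
  qed
  have int: "integrable ?PK ?H"
    by (rule finite_measure.integrable_const_bound[where B=1])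
       (use pk bnd Hm in \<open>auto simp: prob_space_def\<close>)
  have "(\<integral>\<^sup>+y. ennreal (?H y) \<partial>?PK) = ennreal (integral\<^sup>L ?PK ?H)"
    by (rule nn_integral_eq_integral[OF int]) (use bnd in \<open>auto intro!: prod_nonneg simp: kp\<close>)
  then show ?thesis using 1 by (simp add: hom_density_def)
qed

abbreviation "TB \<equiv> PiM UNIV (\<lambda>_::nat\<times>nat. count_space (UNIV :: bool set))"

lemma space_TB[simp]: "space TB = UNIV"
  by (simp add: space_PiM PiE_UNIV_domain)

lemma G_sets:
  assumes "finite S"
  shows "{f. \<forall>p\<in>S. f p} \<in> sets TB"
proof -
  have "{f \<in> space TB. \<forall>p\<in>S. f p} \<in> sets TB"
  proof (rule sets.sets_Collect_finite_All[OF _ assms])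
    fix p :: "nat \<times> nat"
    have "(\<lambda>f. f p) \<in> measurable TB (count_space UNIV)"
      by (rule measurable_component_singleton) simp
    from measurable_sets[OF this, of "{True}"]
    show "{f \<in> space TB. f p} \<in> sets TB" by (simp add: vimage_def)
  qed
  then show ?thesis by simp
qed

lemma law_value:
  fixes S :: "(nat \<times> nat) set" and g :: "nat \<Rightarrow> nat"
  assumes K: "poset_kernel M lt W" and S: "finite S" and g: "bij_betw g {1..k} (Field S)"
  shows "emeasure (random_poset_law M W n) {f. \<forall>p\<in>S. f p} =
    (if S \<subseteq> label_set n \<times> label_set n
     then ennreal (hom_density M W k (\<lambda>a b. (g a, g b) \<in> trancl S)) else 0)"
proof -
  have "emeasure (random_poset_law M W n) {f. \<forall>p\<in>S. f p}
     = emeasure (sample_space M) (random_poset n W -` {f. \<forall>p\<in>S. f p} \<inter> space (sample_space M))"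
    unfolding random_poset_law_def
    by (rule emeasure_distr[OF rp_meas[OF K] G_sets[OF S]])
  also have "\<dots> = (if S \<subseteq> label_set n \<times> label_set n
     then ennreal (hom_density M W k (\<lambda>a b. (g a, g b) \<in> trancl S)) else 0)"
  proof (cases "S \<subseteq> label_set n \<times> label_set n")
    case True
    have "random_poset n W -` {f. \<forall>p\<in>S. f p} \<inter> space (sample_space M) =
      {\<omega> \<in> space (sample_space M). \<forall>p\<in>S. snd \<omega> p < W (fst \<omega> (fst p)) (fst \<omega> (snd p))}"
      using True by (auto simp: random_poset_def)
    then show ?thesis
      using True event_prob[OF K S] integral_reindex[OF K S g] by simp
  next
    case False
    then obtain i j where ij: "(i, j) \<in> S" "\<not> (i \<in> label_set n \<and> j \<in> label_set n)" by auto
    have "random_poset n W -` {f. \<forall>p\<in>S. f p} \<inter> space (sample_space M) = {}"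
      using ij by (auto simp: random_poset_def)
    then show ?thesis using False by simp
  qed
  finally show ?thesis .
qed

lemma hom_density_zero:
  assumes K: "poset_kernel M lt W" and a: "a \<in> {1..k}" "Q a a"
  shows "hom_density M W k Q = 0"
proof -
  let ?Qs = "{(i, j). i \<in> {1..k} \<and> j \<in> {1..k} \<and> Q i j}"
  have "(\<Prod>(i, j)\<in>?Qs. W (x i) (x j)) = 0" for x :: "nat \<Rightarrow> 'a"
  proof -
    have fin: "finite ?Qs" by (rule finite_subset[of _ "{1..k} \<times> {1..k}"]) auto
    have "(a, a) \<in> ?Qs" using a by auto
    moreover have "W (x a) (x a) = 0" using kernel_props(4)[OF K] by simp
    ultimately show ?thesis using fin by (subst prod_zero_iff) force+
  qed
  then show ?thesis by (simp add: hom_density_def)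
qed

lemma hom_density_0:
  assumes K: "poset_kernel M lt W"
  shows "hom_density M W 0 Q = 1"
  by (simp add: hom_density_def PiM_empty)

lemma sets_TB_G:
  "sets TB = sigma_sets UNIV {{f. \<forall>p\<in>S. f p} | S. finite (S :: (nat \<times> nat) set)}"
proof -
  let ?G = "{{f. \<forall>p\<in>S. f p} | S. finite (S :: (nat \<times> nat) set)}"
  have base: "sets TB = sigma_sets UNIV {{f :: nat \<times> nat \<Rightarrow> bool. f i \<in> A} | i A. True}"
    unfolding sets_PiM_single by (simp add: PiE_UNIV_domain)
  also have "\<dots> = sigma_sets UNIV ?G"
  proof (rule sigma_sets_eqI)
    fix a assume "a \<in> {{f :: nat \<times> nat \<Rightarrow> bool. f i \<in> A} | i A. True}"
    then obtain i A where a: "a = {f :: nat \<times> nat \<Rightarrow> bool. f i \<in> A}" by blast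
    have G1: "{f. \<forall>p\<in>{i}. f p} \<in> ?G" by blast
    have G0: "{f. \<forall>p\<in>{}. f p} \<in> ?G" by blast
    have T: "{f :: nat \<times> nat \<Rightarrow> bool. f i} \<in> sigma_sets UNIV ?G"
    proof -
      have "{f :: nat \<times> nat \<Rightarrow> bool. f i} = {f. \<forall>p\<in>{i}. f p}" by simp
      then show ?thesis using G1 by (auto intro: sigma_sets.Basic)
    qed
    have F: "{f :: nat \<times> nat \<Rightarrow> bool. \<not> f i} \<in> sigma_sets UNIV ?G"
    proof -
      have "{f :: nat \<times> nat \<Rightarrow> bool. \<not> f i} = UNIV - {f. f i}" by auto
      then show ?thesis using T by (auto intro: sigma_sets.Compl)
    qed
    have dec: "a = (if True \<in> A then {f. f i} else {}) \<union> (if False \<in> A then {f. \<not> f i} else {})"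
      unfolding a by (auto; metis (full_types))
    show "a \<in> sigma_sets UNIV ?G"
      unfolding dec using T F by (auto intro: sigma_sets_Un sigma_sets.Empty)
  next
    fix b assume "b \<in> ?G"
    then obtain S where "b = {f. \<forall>p\<in>S. f p}" "finite S" by blast
    then have "b \<in> sets TB" using G_sets by simp
    then show "b \<in> sigma_sets UNIV {{f :: nat \<times> nat \<Rightarrow> bool. f i \<in> A} | i A. True}" using base by simp
  qed
  finally show ?thesis .
qed

theorem theorem1p8:
  fixes M1 :: "'a measure" and less1 :: "'a \<Rightarrow> 'a \<Rightarrow> bool" and W1 :: "'a \<Rightarrow> 'a \<Rightarrow> real"
    and M2 :: "'b measure" and less2 :: "'b \<Rightarrow> 'b \<Rightarrow> bool" and W2 :: "'b \<Rightarrow> 'b \<Rightarrow> real"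
    and n :: enat
  assumes "poset_kernel M1 less1 W1"
    and "poset_kernel M2 less2 W2"
    and "\<forall>k Q. finite_poset_on k Q \<longrightarrow> hom_density M1 W1 k Q = hom_density M2 W2 k Q"
  shows "random_poset_law M1 W1 n = random_poset_law M2 W2 n"
proof -
  note K1 = assms(1) and K2 = assms(2) and H = assms(3)
  let ?G = "{{f. \<forall>p\<in>S. f p} | S. finite (S :: (nat \<times> nat) set)}"
  have eq: "emeasure (random_poset_law M1 W1 n) X = emeasure (random_poset_law M2 W2 n) X"
    if "X \<in> ?G" for X
  proof -
    have "\<exists>S :: (nat \<times> nat) set. X = {f. \<forall>p\<in>S. f p} \<and> finite S" using that by simp
    then obtain S :: "(nat \<times> nat) set" where X: "X = {f. \<forall>p\<in>S. f p}" and S: "finite S"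
      by (elim exE conjE)
    define k where "k = card (Field S)"
    have "finite (Field S)" using S by (simp add: finite_Field)
    then have "\<exists>h. bij_betw h {1..k} (Field S)" unfolding k_def by (rule ex_bij_betw_nat_finite_1)
    then obtain g where g: "bij_betw g {1..k} (Field S)" by blast
    define Q where "Q = (\<lambda>a b. (g a, g b) \<in> trancl S)"
    have hd: "hom_density M1 W1 k Q = hom_density M2 W2 k Q"
    proof (cases "k = 0")
      case True then show ?thesis using hom_density_0[OF K1] hom_density_0[OF K2] by simp
    next
      case k0: False
      show ?thesis
      proof (cases "\<exists>a\<in>{1..k}. Q a a")
        case True
        then obtain a where a: "a \<in> {1..k}" "Q a a" by blast
        show ?thesis using hom_density_zero[OF K1 a(1), of Q] hom_density_zero[OF K2 a(1), of Q] a(2) by simp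
      next
        case False
        have "finite_poset_on k Q"
        proof -
          have "k \<ge> 1" using k0 by simp
          moreover have "\<forall>i\<in>{1..k}. \<not> Q i i" using False by blast
          moreover have "\<forall>i\<in>{1..k}. \<forall>j\<in>{1..k}. \<forall>l\<in>{1..k}. Q i j \<longrightarrow> Q j l \<longrightarrow> Q i l"
            unfolding Q_def by (meson trancl_trans)
          ultimately show ?thesis unfolding finite_poset_on_def by blast
        qed
        then show ?thesis using H by blast
      qed
    qed
    have L1: "emeasure (random_poset_law M1 W1 n) {f. \<forall>p\<in>S. f p} =
      (if S \<subseteq> label_set n \<times> label_set n then ennreal (hom_density M1 W1 k Q) else 0)"
      using law_value[OF K1 S g, of n] unfolding Q_def .
    have L2: "emeasure (random_poset_law M2 W2 n) {f. \<forall>p\<in>S. f p} =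
      (if S \<subseteq> label_set n \<times> label_set n then ennreal (hom_density M2 W2 k Q) else 0)"
      using law_value[OF K2 S g, of n] unfolding Q_def .
    show ?thesis unfolding X L1 L2 hd ..
  qed
  show ?thesis
  proof (rule measure_eqI_generator_eq[of ?G UNIV _ _ "\<lambda>_. UNIV"])
    show "Int_stable ?G"
    proof (rule Int_stableI)
      fix a b assume "a \<in> ?G" "b \<in> ?G"
      then obtain S T :: "(nat \<times> nat) set" where "a = {f. \<forall>p\<in>S. f p}" "finite S"
        "b = {f. \<forall>p\<in>T. f p}" "finite T" by blast
      then have "a \<inter> b = {f. \<forall>p\<in>S \<union> T. f p}" "finite (S \<union> T)" by auto
      then show "a \<inter> b \<in> ?G" by blast
    qed
    show "?G \<subseteq> Pow UNIV" by simp
    show "sets (random_poset_law M1 W1 n) = sigma_sets UNIV ?G"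
      by (simp add: random_poset_law_def sets_TB_G)
    show "sets (random_poset_law M2 W2 n) = sigma_sets UNIV ?G"
      by (simp add: random_poset_law_def sets_TB_G)
    have U: "{f :: nat \<times> nat \<Rightarrow> bool. \<forall>p\<in>{}. f p} = UNIV" by simp
    have "{f :: nat \<times> nat \<Rightarrow> bool. \<forall>p\<in>{}. f p} \<in> ?G" by blast
    then have "UNIV \<in> ?G" unfolding U .
    then show "range (\<lambda>_. UNIV) \<subseteq> ?G" by blast
    show "(\<Union>i::nat. UNIV) = UNIV" by simp
    have b: "bij_betw id {1..0::nat} (Field ({} :: (nat \<times> nat) set))" by (simp add: Field_def)
    show "emeasure (random_poset_law M1 W1 n) UNIV \<noteq> \<infinity>" for i :: nat
      using law_value[OF K1 _ b, of n] unfolding U by simp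
    show "\<And>X. X \<in> ?G \<Longrightarrow> emeasure (random_poset_law M1 W1 n) X = emeasure (random_poset_law M2 W2 n) X"
      by (rule eq)
  qed
qed

end
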